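(* Let $S\ge 1$, let $h_1,h_2,\ldots\in[S]$ be an arbitrary side-information sequence, let $T\ge 1$, and let $\mathbf g_1,\ldots,\mathbf g_T\in\mathbb B$ be arbitrary. Consider the per-state KT betting algorithm with initial wealth $\mathsf W_0>0$, which at round $t$ plays $$\mathbf w_t=\mathbf v\big(\mathbf g^{t-1}(h_t;h^{t-1})\big)\,\mathsf W_{t-1}.$$ For $s\in[S]$ let $T_s=|\{t\in[T]: h_t=s\}|$, and let $\phi_{T_{1:S}}:\mathbb R^S\to(-\infty,+\infty]$ be the Fenchel dual of the function $F(f_1,\ldots,f_S)=\prod_{s=1}^S\psi_{T_s}(f_s)$. Then: (i) $\mathsf W_T\ge \mathsf W_0\prod_{s=1}^S\Psi\big(\mathbf g^T(s;h^T)\big)$; (ii) for every $\mathbf u_1,\ldots,\mathbf u_S\in V$, $$\mathsf{Reg}(\mathbf u_{1:S}[H];\mathbf g^T)\le \mathsf W_0+\mathsf W_0\,\phi_{T_{1:S}}\Big(\tfrac{\|\mathbf u_1\|}{\mathsf W_0},\ldots,\tfrac{\|\mathbf u_S\|}{\mathsf W_0}\Big).$$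
   Context: Let $V$ be a real Hilbert space with inner product $\langle\cdot,\cdot\rangle$ and norm $\|\cdot\|$, and $\mathbb B=\{\mathbf x\in V:\|\mathbf x\|\le 1\}$. For a finite tuple $\mathbf a=(\mathbf a_1,\ldots,\mathbf a_n)$ of vectors, $\textstyle\sum\mathbf a=\mathbf a_1+\cdots+\mathbf a_n$ (the empty tuple has sum $0$) and $|\mathbf a|=n$. KT potential: for an integer $t\ge0$ and $x\in[-t,t]$, $q_t(x)=B\big(\tfrac{t+x+1}{2},\tfrac{t-x+1}{2}\big)/B\big(\tfrac12,\tfrac12\big)$ with $B$ the Beta function, and $\psi_t(x)=2^tq_t(x)$ (so $\psi_0(0)=1$); set $\psi_t(x)=+\infty$ for $x\notin[-t,t]$. For a finite tuple $\mathbf a$ of vectors in $\mathbb B$, $\Psi(\mathbf a)=\psi_{|\mathbf a|}(\|\sum\mathbf a\|)$, and the vectorial KT bet is $\mathbf v(\mathbf a)=\frac{1}{|\mathbf a|+1}\sum\mathbf a$. Protocol: at round $t$ the algorithm plays $\mathbf w_t\in V$ (depending only on $\mathbf g_1,\ldots,\mathbf g_{t-1}$ and the side information available up to round $t$), then observes $\mathbf g_t\in\mathbb B$; its wealth is $\mathsf W_t=\mathsf W_0+\sum_{i=1}^t\langle\mathbf g_i,\mathbf w_i\rangle$. Side information: $h_t\in[S]$ is revealed before the play at round $t$. For $s\in[S]$, $\mathbf g^t(s;h^t)$ denotes the tuple of those $\mathbf g_i$ with $i\le t$ and $h_i=s$, in increasing order of $i$. For $\mathbf u_1,\ldots,\mathbf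 u_S\in V$, the adaptive competitor $\mathbf u_{1:S}[H]$ plays $\mathbf u_{h_t}$ at round $t$, and its regret is $\mathsf{Reg}(\mathbf u_{1:S}[H];\mathbf g^T)=\sum_{t=1}^T\langle\mathbf g_t,\mathbf u_{h_t}\rangle-\sum_{t=1}^T\langle\mathbf g_t,\mathbf w_t\rangle$. The Fenchel dual of $F:\mathbb R^S\to(-\infty,+\infty]$ is $F^\star(\mathbf y)=\sup_{\mathbf x\in\mathbb R^S}(\mathbf y^\top\mathbf x-F(\mathbf x))$. *)

theory Defs
  imports "HOL-Analysis.Analysis" "HOL-Library.FuncSet"
begin

definition kt_psi :: "nat \<Rightarrow> real \<Rightarrow> ereal" where
  "kt_psi t x = (if - real t \<le> x \<and> x \<le> real t
     then ereal (2 ^ t * (Beta ((real t + x + 1) / 2) ((real t - x + 1) / 2) / Beta (1/2) (1/2)))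
     else \<infinity>)"

definition kt_Psi :: "'v::real_inner list \<Rightarrow> ereal" where
  "kt_Psi a = kt_psi (length a) (norm (sum_list a))"

definition kt_bet :: "'v::real_inner list \<Rightarrow> 'v" where
  "kt_bet a = (1 / (real (length a) + 1)) *\<^sub>R sum_list a"

definition sub_tuple :: "(nat \<Rightarrow> 'v) \<Rightarrow> (nat \<Rightarrow> nat) \<Rightarrow> nat \<Rightarrow> nat \<Rightarrow> 'v list" where
  "sub_tuple g h t s = map g (filter (\<lambda>i. h i = s) [1..<Suc t])"

definition wealth :: "real \<Rightarrow> (nat \<Rightarrow> 'v::real_inner) \<Rightarrow> (nat \<Rightarrow> 'v) \<Rightarrow> nat \<Rightarrow> real" where
  "wealth W0 g w t = W0 + (\<Sum>i=1..t. inner (g i) (w i))"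

definition regret :: "(nat \<Rightarrow> 'v::real_inner) \<Rightarrow> (nat \<Rightarrow> nat) \<Rightarrow> (nat \<Rightarrow> 'v) \<Rightarrow> (nat \<Rightarrow> 'v) \<Rightarrow> nat \<Rightarrow> real" where
  "regret u h g w T = (\<Sum>t=1..T. inner (g t) (u (h t))) - (\<Sum>t=1..T. inner (g t) (w t))"

definition state_count :: "(nat \<Rightarrow> nat) \<Rightarrow> nat \<Rightarrow> nat \<Rightarrow> nat" where
  "state_count h T s = card {t \<in> {1..T}. h t = s}"

text \<open>Fenchel dual of a function F : R^S \<rightarrow> (-\<infinity>,+\<infinity>], vectors of R^S represented as
  extensional functions on {1..S}.\<close>
definition fenchel_dual :: "nat \<Rightarrow> ((nat \<Rightarrow> real) \<Rightarrow> ereal) \<Rightarrow> (nat \<Rightarrow> real) \<Rightarrow> ereal" where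
  "fenchel_dual S F y = (SUP x \<in> ({1..S} \<rightarrow>\<^sub>E (UNIV :: real set)).
      ereal (\<Sum>s=1..S. y s * x s) - F x)"

definition kt_phi :: "nat \<Rightarrow> (nat \<Rightarrow> nat) \<Rightarrow> (nat \<Rightarrow> real) \<Rightarrow> ereal" where
  "kt_phi S Tc = fenchel_dual S (\<lambda>f. \<Prod>s\<in>{1..S}. kt_psi (Tc s) (f s))"

end

theory Submission
  imports Defs
begin


lemma pow_convex0:
  fixes z1 z2 th :: real and m :: nat
  assumes "z1 \<ge> 0" "z2 \<ge> 0" "0 \<le> th" "th \<le> 1"
  shows "(th * z1 + (1 - th) * z2) ^ m \<le> th * z1 ^ m + (1 - th) * z2 ^ m"
proof -
  have cv: "convex_on {0..} (\<lambda>x::real. x ^ m)"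
  proof (cases "even m")
    case True then show ?thesis using convex_power_even convex_on_subset by blast
  next
    case False then show ?thesis using convex_power_odd by blast
  qed
  show ?thesis using convex_onD[OF cv, of th z2 z1] assms by (simp add: algebra_simps)
qed

lemma cosh_sqrt_convex:
  fixes u z1 z2 th :: real
  assumes "z1 \<ge> 0" "z2 \<ge> 0" "0 \<le> th" "th \<le> 1"
  shows "cosh (u * sqrt (th * z1 + (1 - th) * z2)) \<le> th * cosh (u * sqrt z1) + (1 - th) * cosh (u * sqrt z2)"
proof -
  define a where "a n = (if even n then u ^ n / fact n else 0)" for n :: nat
  have ser: "(\<lambda>n. a n * z ^ (n div 2)) sums cosh (u * sqrt z)" if "z \<ge> 0" for z
  proof -
    have "(\<lambda>n. if even n then (u * sqrt z) ^ n /\<^sub>R fact n else 0) sums cosh (u * sqrt z)"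
      by (rule cosh_converges)
    moreover have "(if even n then (u * sqrt z) ^ n /\<^sub>R fact n else 0) = a n * z ^ (n div 2)" for n
    proof (cases "even n")
      case True
      then obtain k where "n = 2 * k" by blast
      then show ?thesis using that by (simp add: a_def power_mult_distrib power_mult divide_inverse)
    qed (simp add: a_def)
    ultimately show ?thesis by simp
  qed
  have apos: "a n \<ge> 0" for n by (simp add: a_def zero_le_even_power)
  have z0: "th * z1 + (1 - th) * z2 \<ge> 0" using assms by simp
  have "(\<lambda>n. th * (a n * z1 ^ (n div 2)) + (1 - th) * (a n * z2 ^ (n div 2))) sums
        (th * cosh (u * sqrt z1) + (1 - th) * cosh (u * sqrt z2))"
    by (intro sums_add sums_mult ser assms)
  moreover have le: "a n * (th * z1 + (1 - th) * z2) ^ (n div 2) \<le> th * (a n * z1 ^ (n div 2)) + (1 - th) * (a n * z2 ^ (n div 2))" for n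
    using mult_left_mono[OF pow_convex0[OF assms, of "n div 2"] apos[of n]] by (simp add: algebra_simps)
  ultimately show ?thesis by (intro sums_le[OF le ser[OF z0]])
qed

lemma cosh_key:
  fixes u r al s :: real
  assumes "r \<ge> 0" "-1 \<le> al" "al \<le> 1" "s \<ge> 0" "s^2 \<le> r^2 + 2*r*al + 1"
  shows "cosh (u * s) \<le> (1 + al)/2 * cosh (u * (r+1)) + (1 - al)/2 * cosh (u * (r - 1))"
proof -
  define th where "th = (1 + al)/2"
  have th: "0 \<le> th" "th \<le> 1" using assms by (auto simp: th_def)
  have eq: "th * (r+1)^2 + (1 - th) * (r-1)^2 = r^2 + 2*r*al + 1"
    by (simp add: th_def power2_eq_square field_simps)
  have "s \<le> sqrt (r^2 + 2*r*al + 1)" using assms real_le_rsqrt by blast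
  hence "cosh (u * s) \<le> cosh (u * sqrt (r^2 + 2*r*al + 1))"
  proof -
    assume h: "s \<le> sqrt (r^2 + 2*r*al + 1)"
    have "cosh (u * s) = cosh (\<bar>u\<bar> * s)"
    proof (cases "u \<ge> 0")
      case False
      then have "\<bar>u\<bar> * s = - (u * s)" by simp
      then show ?thesis by (simp only: cosh_minus)
    qed simp
    also have "\<dots> \<le> cosh (\<bar>u\<bar> * sqrt (r^2 + 2*r*al + 1))"
      using h assms(4) order_trans[OF assms(4) h] by (subst cosh_real_nonneg_le_iff) (auto intro: mult_left_mono)
    also have "\<dots> = cosh (u * sqrt (r^2 + 2*r*al + 1))"
    proof (cases "u \<ge> 0")
      case False
      then have "\<bar>u\<bar> * sqrt (r^2 + 2*r*al + 1) = - (u * sqrt (r^2 + 2*r*al + 1))" by simp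
      then show ?thesis by (simp only: cosh_minus)
    qed simp
    finally show ?thesis .
  qed
  also have "\<dots> \<le> th * cosh (u * sqrt ((r+1)^2)) + (1 - th) * cosh (u * sqrt ((r-1)^2))"
    using cosh_sqrt_convex[of "(r+1)^2" "(r-1)^2" th u] th by (simp only: eq) simp
  also have "\<dots> = th * cosh (u * (r+1)) + (1 - th) * cosh (u * (r-1))"
  proof -
    have "cosh (u * \<bar>r-1\<bar>) = cosh (u * (r-1))"
    proof (cases "r \<ge> 1")
      case False
      then have "u * \<bar>r-1\<bar> = - (u * (r-1))" by (simp add: algebra_simps)
      then show ?thesis by (simp only: cosh_minus)
    qed simp
    then show ?thesis using assms(1) by simp
  qed
  also have "1 - th = (1 - al)/2" by (simp add: th_def field_simps)
  finally show ?thesis by (simp add: th_def)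
qed



definition Phi :: "real \<Rightarrow> real \<Rightarrow> real" where
  "Phi c y = Beta ((c + y)/2) ((c - y)/2)"

definition bint :: "real \<Rightarrow> real \<Rightarrow> real \<Rightarrow> real" where
  "bint c y p = p powr ((c + y)/2 - 1) * (1 - p) powr ((c - y)/2 - 1)"

lemma Phi_sym: "Phi c (-y) = Phi c y"
  by (simp add: Phi_def Beta_commute)

lemma bint_int: assumes "\<bar>y\<bar> < c"
  shows "(bint c y has_integral Phi c y) {0<..<1}"
proof -
  have "((\<lambda>t. t powr ((c + y)/2 - 1) * (1 - t) powr ((c - y)/2 - 1)) has_integral Beta ((c + y)/2) ((c - y)/2)) {0..1}"
    using assms by (intro has_integral_Beta_real) auto
  then show ?thesis unfolding bint_def Phi_def by (simp add: has_integral_Icc_iff_Ioo)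
qed

lemma q1: "((c+y)/2 - 1)*A + ((c-y)/2-1)*B = (c/2-1)*(A+B) + y*((A-B)/2)" for c y A B :: real
  by (simp add: field_simps)

lemma bint_cosh:
  assumes "0 < p" "p < 1"
  shows "(bint c y p + bint c (-y) p) / 2 = exp ((c/2 - 1) * (ln p + ln (1 - p))) * cosh (y * ((ln p - ln (1 - p))/2))"
proof -
  have e: "bint c y p = exp ((c/2 - 1) * (ln p + ln (1 - p))) * exp (y * ((ln p - ln (1 - p))/2))" for y
  proof -
    have "((c + y)/2 - 1) * ln p + ((c - y)/2 - 1) * ln (1 - p) = (c/2 - 1) * (ln p + ln (1 - p)) + y * ((ln p - ln (1 - p))/2)"
      by (rule q1)
    note eq = this
    have "bint c y p = exp (((c + y)/2 - 1) * ln p + ((c - y)/2 - 1) * ln (1 - p))"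
      unfolding bint_def using assms by (simp add: powr_def exp_add)
    also have "\<dots> = exp ((c/2 - 1) * (ln p + ln (1 - p)) + y * ((ln p - ln (1 - p))/2))"
      by (simp only: eq)
    finally show ?thesis by (simp only: exp_add)
  qed
  define K where "K = exp ((c/2 - 1) * (ln p + ln (1 - p)))"
  define L where "L = (ln p - ln (1 - p))/2"
  have "(K * exp (y * L) + K * exp (- y * L)) / 2 = K * cosh (y * L)"
    by (simp add: cosh_def field_simps)
  then show ?thesis unfolding e K_def[symmetric] L_def[symmetric] .
qed

lemma Phi_key:
  fixes c r al s :: real
  assumes "r \<ge> 0" "r + 1 < c" "-1 \<le> al" "al \<le> 1" "s \<ge> 0" "s^2 \<le> r^2 + 2*r*al + 1"
  shows "Phi c s \<le> (1 + al)/2 * Phi c (r+1) + (1 - al)/2 * Phi c (r - 1)"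
proof -
  have "r*al \<le> r" using mult_left_mono[of al 1 r] assms(1,4) by simp
  moreover have "(r+1)^2 = r^2 + 2*r + 1" by (simp add: power2_sum)
  ultimately have "s^2 \<le> (r+1)^2" using assms(6) by linarith
  hence "s \<le> r + 1" by (rule power2_le_imp_le) (use assms(1) in linarith)
  hence sc: "\<bar>s\<bar> < c" using assms(2,5) by linarith
  have c1: "\<bar>r+1\<bar> < c" "\<bar>r-1\<bar> < c" using assms(1,2) by linarith+
  define G where "G y p = (bint c y p + bint c (-y) p) / 2" for y p
  have GI: "(G y has_integral Phi c y) {0<..<1}" if "\<bar>y\<bar> < c" for y
  proof -
    have "((\<lambda>p. (bint c y p + bint c (-y) p) / 2) has_integral (Phi c y + Phi c (-y)) / 2) {0<..<1}"
      using bint_int[of y c] bint_int[of "-y" c] that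
      by (intro has_integral_divide has_integral_add) auto
    then show ?thesis unfolding G_def Phi_sym by simp
  qed
  have RI: "((\<lambda>p. (1 + al)/2 * G (r+1) p + (1 - al)/2 * G (r-1) p) has_integral
      ((1 + al)/2 * Phi c (r+1) + (1 - al)/2 * Phi c (r - 1))) {0<..<1}"
    by (intro has_integral_add has_integral_mult_right GI c1)
  show ?thesis
  proof (rule has_integral_le[OF GI[OF sc] RI])
    fix p assume "p \<in> {0<..<(1::real)}"
    hence p: "0 < p" "p < 1" by auto
    define K where "K = exp ((c/2 - 1) * (ln p + ln (1 - p)))"
    define L where "L = (ln p - ln (1 - p))/2"
    have "G y p = K * cosh (y * L)" for y unfolding G_def K_def L_def using bint_cosh[OF p] by simp
    moreover have "K * cosh (s * L) \<le> K * ((1 + al)/2 * cosh ((r+1) * L) + (1 - al)/2 * cosh ((r - 1) * L))"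
      using cosh_key[OF assms(1,3,4,5,6), of L] by (intro mult_left_mono) (auto simp: K_def mult.commute)
    ultimately show "G s p \<le> (1 + al)/2 * G (r+1) p + (1 - al)/2 * G (r-1) p"
      by (simp add: algebra_simps)
  qed
qed

lemma Phi_rec:
  fixes t :: nat and y :: real
  assumes "\<bar>y\<bar> \<le> real t"
  shows "Phi (real t + 2) (y + 1) = Phi (real t + 1) y * (real t + 1 + y) / (2 * (real t + 1))"
    "Phi (real t + 2) (y - 1) = Phi (real t + 1) y * (real t + 1 - y) / (2 * (real t + 1))"
proof -
  define a where "a = (real t + 1 + y)/2"
  define b where "b = (real t + 1 - y)/2"
  have a: "a > 0" and b: "b > 0" using assms by (auto simp: a_def b_def)
  hence an: "a \<notin> \<int>\<^sub>\<le>\<^sub>0" and bn: "b \<notin> \<int>\<^sub>\<le>\<^sub>0" by (auto elim!: nonpos_Ints_cases)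
  have ab: "a + b = real t + 1" by (simp add: a_def b_def field_simps)
  have 1: "Phi (real t + 2) (y + 1) = Beta (a+1) b" unfolding Phi_def a_def b_def by (simp add: field_simps)
  have 2: "Phi (real t + 2) (y - 1) = Beta a (b+1)" unfolding Phi_def a_def b_def by (simp add: field_simps)
  have 3: "Phi (real t + 1) y = Beta a b" unfolding Phi_def a_def b_def by simp
  show "Phi (real t + 2) (y + 1) = Phi (real t + 1) y * (real t + 1 + y) / (2 * (real t + 1))"
    using Beta_plus1_left[OF an, of b] unfolding 1 3 ab
    by (simp add: field_simps a_def)
  show "Phi (real t + 2) (y - 1) = Phi (real t + 1) y * (real t + 1 - y) / (2 * (real t + 1))"
    using Beta_plus1_right[OF bn, of a] unfolding 2 3 ab
    by (simp add: field_simps b_def)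
qed



definition psiR :: "nat \<Rightarrow> real \<Rightarrow> real" where
  "psiR t x = 2 ^ t * Phi (real t + 1) x / Beta (1/2) (1/2)"

lemma Beta_pos: "a > 0 \<Longrightarrow> b > 0 \<Longrightarrow> Beta a b > (0::real)"
  by (simp add: Beta_def Gamma_real_pos)

lemma Phi_pos: "\<bar>y\<bar> < c \<Longrightarrow> Phi c y > 0"
  unfolding Phi_def by (intro Beta_pos) auto

lemma psiR_nonneg: "\<bar>x\<bar> \<le> real t \<Longrightarrow> psiR t x \<ge> 0"
  unfolding psiR_def using Phi_pos[of x "real t + 1"] Beta_pos[of "1/2" "1/2"] by simp

lemma kt_psi_eq: "\<bar>x\<bar> \<le> real t \<Longrightarrow> kt_psi t x = ereal (psiR t x)"
proof -
  assume "\<bar>x\<bar> \<le> real t"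
  moreover have "(real t + x + 1) / 2 = (real t + 1 + x)/2" "(real t - x + 1) / 2 = (real t + 1 - x)/2" by simp_all
  moreover have "- real t \<le> x \<and> x \<le> real t" using calculation(1) by (simp add: abs_le_iff)
  ultimately show ?thesis unfolding kt_psi_def psiR_def Phi_def by (simp only: if_True ereal.inject) simp
qed

lemma psiR_0: "psiR 0 0 = 1"
  unfolding psiR_def Phi_def using Beta_pos[of "1/2" "1/2"] by simp

lemma psi_step:
  fixes t :: nat and r al s :: real
  assumes "0 \<le> r" "r \<le> real t" "-1 \<le> al" "al \<le> 1" "s \<ge> 0" "s^2 \<le> r^2 + 2*r*al + 1"
  shows "psiR (Suc t) s \<le> psiR t r * (1 + al * r / (real t + 1))"
proof -
  have B: "Beta (1/2) (1/2) > (0::real)" by (rule Beta_pos) auto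
  have k: "Phi (real t + 2) s \<le> (1 + al)/2 * Phi (real t + 2) (r+1) + (1 - al)/2 * Phi (real t + 2) (r - 1)"
    using assms by (intro Phi_key) auto
  have rr: "\<bar>r\<bar> \<le> real t" using assms by simp
  have T1: "real t + 1 > 0" by simp
  have q2: "T1 > 0 \<Longrightarrow> (1+al)/2 * (P*(T1+r)/(2*T1)) + (1-al)/2*(P*(T1-r)/(2*T1)) = P*(1+al*r/T1)/2" for T1 P :: real
    by (simp add: field_simps)
  have "(1 + al)/2 * Phi (real t + 2) (r+1) + (1 - al)/2 * Phi (real t + 2) (r - 1)
      = Phi (real t + 1) r * (1 + al * r / (real t + 1)) / 2"
    unfolding Phi_rec[OF rr] using q2[OF T1, of "Phi (real t + 1) r"] by (simp add: mult.assoc add_ac)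
  with k have "Phi (real t + 2) s \<le> Phi (real t + 1) r * (1 + al * r / (real t + 1)) / 2" by simp
  hence "2 ^ Suc t * Phi (real t + 2) s / Beta (1/2) (1/2) \<le>
      2 ^ Suc t * (Phi (real t + 1) r * (1 + al * r / (real t + 1)) / 2) / Beta (1/2) (1/2)"
    using B by (intro divide_right_mono mult_left_mono) auto
  moreover have "real (Suc t) + 1 = real t + 2" by simp
  hence "psiR (Suc t) s = 2 ^ Suc t * Phi (real t + 2) s / Beta (1/2) (1/2)" by (simp only: psiR_def)
  moreover have "2 ^ Suc t * (Phi (real t + 1) r * (1 + al * r / (real t + 1)) / 2) / Beta (1/2) (1/2)
      = psiR t r * (1 + al * r / (real t + 1))"
  proof -
    have g: "2 ^ Suc t * (P * X / 2) / BB = 2 ^ t * P / BB * X" for P X BB :: real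
      by (simp add: field_simps)
    show ?thesis unfolding psiR_def by (rule g)
  qed
  ultimately show ?thesis by simp
qed

lemma norm_sum_list_le:
  fixes a :: "'v::real_normed_vector list"
  assumes "\<forall>x\<in>set a. norm x \<le> 1"
  shows "norm (sum_list a) \<le> real (length a)"
  using assms
proof (induction a)
  case (Cons x a)
  then show ?case using norm_triangle_ineq[of x "sum_list a"] by auto
qed simp

lemma vec_step:
  fixes a :: "'v::real_inner list" and g :: 'v
  assumes "\<forall>x\<in>set a. norm x \<le> 1" "norm g \<le> 1"
  shows "psiR (Suc (length a)) (norm (sum_list a + g)) \<le> psiR (length a) (norm (sum_list a)) * (1 + inner g (kt_bet a))"
proof -
  define x where "x = sum_list a"
  define r where "r = norm x"
  define t where "t = length a"
  have rt: "r \<le> real t" unfolding r_def x_def t_def by (rule norm_sum_list_le[OF assms(1)])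
  define al where "al = (if r = 0 then 0 else inner g x / r)"
  have alr: "al * r = inner g x" by (auto simp: al_def r_def)
  have al1: "\<bar>al\<bar> \<le> 1"
  proof (cases "r = 0")
    case False
    hence rp: "r > 0" by (simp add: r_def)
    have "\<bar>inner g x\<bar> \<le> norm g * norm x" by (rule Cauchy_Schwarz_ineq2)
    also have "\<dots> \<le> r" using mult_right_mono[OF assms(2) norm_ge_zero[of x]] by (simp add: r_def)
    finally have "\<bar>inner g x\<bar> \<le> r" .
    moreover have e: "\<bar>al\<bar> * r = \<bar>inner g x\<bar>" by (metis abs_mult abs_of_pos alr rp)
    ultimately have "\<bar>al\<bar> * r \<le> 1 * r" by simp
    then show ?thesis using mult_le_cancel_right_pos[OF rp, of "\<bar>al\<bar>" 1] by blast
  qed (simp add: al_def)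
  have s2: "(norm (x + g))^2 \<le> r^2 + 2*r*al + 1"
  proof -
    have "(norm (x + g))^2 = r^2 + 2 * inner g x + (norm g)^2"
      by (simp add: r_def power2_norm_eq_inner inner_add_left inner_add_right inner_commute algebra_simps)
    moreover have "(norm g)^2 \<le> 1" using assms(2) by (simp add: power_le_one)
    ultimately show ?thesis using alr by (simp add: algebra_simps)
  qed
  have "psiR (Suc t) (norm (x + g)) \<le> psiR t r * (1 + al * r / (real t + 1))"
    using al1 rt s2 by (intro psi_step) (auto simp: r_def)
  moreover have "inner g (kt_bet a) = al * r / (real t + 1)"
    unfolding kt_bet_def alr by (simp add: x_def t_def inner_scaleR_right)
  ultimately show ?thesis by (simp add: x_def r_def t_def)
qed



lemma sub_tuple_0: "sub_tuple g h 0 s = []"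
  by (simp add: sub_tuple_def)

lemma sub_tuple_Suc: "sub_tuple g h (Suc t) s =
   (if h (Suc t) = s then sub_tuple g h t s @ [g (Suc t)] else sub_tuple g h t s)"
  unfolding sub_tuple_def using upt_Suc_append[of 1 "Suc t"] by simp

lemma sub_tuple_set: "set (sub_tuple g h t s) \<subseteq> g ` {1..t}"
  unfolding sub_tuple_def by auto

lemma sub_tuple_distinct_set: "set (filter (\<lambda>i. h i = s) [1..<Suc t]) = {i \<in> {1..t}. h i = s}"
  by auto

lemma sub_tuple_length: "length (sub_tuple g h T s) = state_count h T s"
proof -
  have d: "distinct (filter (\<lambda>i. h i = s) [1..<Suc T])" by simp
  have "length (sub_tuple g h T s) = length (filter (\<lambda>i. h i = s) [1..<Suc T])"
    unfolding sub_tuple_def by (rule length_map)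
  also have "\<dots> = card (set (filter (\<lambda>i. h i = s) [1..<Suc T]))"
    by (rule distinct_card[OF d, symmetric])
  also have "\<dots> = state_count h T s" unfolding state_count_def by (simp only: sub_tuple_distinct_set)
  finally show ?thesis .
qed

lemma sub_tuple_sum: "sum_list (sub_tuple g h T s) = (\<Sum>i\<in>{i \<in> {1..T}. h i = s}. g i)"
proof -
  have d: "distinct (filter (\<lambda>i. h i = s) [1..<Suc T])" by simp
  show ?thesis unfolding sub_tuple_def sum_list_distinct_conv_sum_set[OF d] sub_tuple_distinct_set ..
qed

lemma wealth_Suc: "wealth W0 g w (Suc t) = wealth W0 g w t + inner (g (Suc t)) (w (Suc t))"
  unfolding wealth_def by simp

lemma inner_bet_le:
  fixes a :: "'v::real_inner list" and gg :: 'v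
  assumes "\<forall>x\<in>set a. norm x \<le> 1" "norm gg \<le> 1"
  shows "\<bar>inner gg (kt_bet a)\<bar> \<le> 1"
proof -
  have n: "norm (sum_list a) \<le> real (length a)" by (rule norm_sum_list_le[OF assms(1)])
  have "\<bar>inner gg (kt_bet a)\<bar> \<le> norm gg * norm (kt_bet a)" by (rule Cauchy_Schwarz_ineq2)
  also have "\<dots> \<le> 1 * norm (kt_bet a)" by (rule mult_right_mono[OF assms(2) norm_ge_zero])
  also have "norm (kt_bet a) = norm (sum_list a) / (real (length a) + 1)"
    unfolding kt_bet_def by simp
  also have "\<dots> \<le> 1" using n by simp
  finally show ?thesis by simp
qed



theorem theorem3:
  fixes S T :: nat and h :: "nat \<Rightarrow> nat" and g w :: "nat \<Rightarrow> 'v::{real_inner, complete_space}"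
    and W0 :: real
  assumes "S \<ge> 1" and "T \<ge> 1"
    and h_range: "\<And>t. t \<ge> 1 \<Longrightarrow> h t \<in> {1..S}"
    and g_ball: "\<And>t. t \<in> {1..T} \<Longrightarrow> norm (g t) \<le> 1"
    and "W0 > 0"
    and play: "\<And>t. t \<in> {1..T} \<Longrightarrow>
       w t = wealth W0 g w (t - 1) *\<^sub>R kt_bet (sub_tuple g h (t - 1) (h t))"
  shows "ereal (wealth W0 g w T) \<ge> ereal W0 * (\<Prod>s\<in>{1..S}. kt_Psi (sub_tuple g h T s))
         \<and> (\<forall>u :: nat \<Rightarrow> 'v. ereal (regret u h g w T)
           \<le> ereal W0 + ereal W0 * kt_phi S (state_count h T) (\<lambda>s. norm (u s) / W0))"
proof -
  define W where "W t = wealth W0 g w t" for t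
  define trm where "trm t s = psiR (length (sub_tuple g h t s)) (norm (sum_list (sub_tuple g h t s)))" for t s
  define P where "P t = (\<Prod>s\<in>{1..S}. trm t s)" for t
  have ball: "\<forall>x\<in>set (sub_tuple g h t s). norm x \<le> 1" if "t \<le> T" for t s
  proof
    fix x assume "x \<in> set (sub_tuple g h t s)"
    then have "x \<in> g ` {1..t}" using sub_tuple_set[of g h t s] by (rule subsetD[rotated])
    then obtain i where "i \<in> {1..t}" "x = g i" by (rule imageE) auto
    then show "norm x \<le> 1" using g_ball that by auto
  qed
  have nle: "norm (sum_list (sub_tuple g h t s)) \<le> real (length (sub_tuple g h t s))" if "t \<le> T" for t s
    by (rule norm_sum_list_le[OF ball[OF that]])
  have trm_nn: "trm t s \<ge> 0" if "t \<le> T" for t s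
    unfolding trm_def by (rule psiR_nonneg) (use nle[OF that] in simp)
  have main: "W t \<ge> W0 * P t" if "t \<le> T" for t
    using that
  proof (induction t)
    case 0
    have "trm 0 s = 1" for s by (simp add: trm_def sub_tuple_0 psiR_0)
    then show ?case by (simp add: P_def W_def wealth_def)
  next
    case (Suc t)
    hence tT: "t \<le> T" by simp
    have IH: "W0 * P t \<le> W t" using Suc by simp
    define s0 where "s0 = h (Suc t)"
    have s0: "s0 \<in> {1..S}" unfolding s0_def by (rule h_range) simp
    define a where "a = sub_tuple g h t s0"
    define gg where "gg = g (Suc t)"
    have gg1: "norm gg \<le> 1" unfolding gg_def using Suc.prems by (intro g_ball) simp
    have aball: "\<forall>x\<in>set a. norm x \<le> 1" unfolding a_def by (rule ball[OF tT])
    define f where "f = 1 + inner gg (kt_bet a)"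
    have f0: "f \<ge> 0" using inner_bet_le[OF aball gg1] unfolding f_def by linarith
    have wS: "w (Suc t) = W t *\<^sub>R kt_bet a"
      using play[of "Suc t"] Suc.prems by (simp add: W_def a_def s0_def)
    have WS: "W (Suc t) = W t * f"
      unfolding W_def wealth_Suc unfolding W_def[symmetric] wS f_def gg_def[symmetric]
      by (simp add: algebra_simps)
    have other: "trm (Suc t) s = trm t s" if "s \<noteq> s0" for s
      using that unfolding trm_def sub_tuple_Suc s0_def by simp
    have at: "trm (Suc t) s0 \<le> trm t s0 * f"
    proof -
      have "trm (Suc t) s0 = psiR (Suc (length a)) (norm (sum_list a + gg))"
        unfolding trm_def sub_tuple_Suc s0_def a_def gg_def by simp
      also have "\<dots> \<le> psiR (length a) (norm (sum_list a)) * f"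
        unfolding f_def by (rule vec_step[OF aball gg1])
      also have "\<dots> = trm t s0 * f" unfolding trm_def a_def ..
      finally show ?thesis .
    qed
    have fin: "finite {1..S}" by simp
    have rest: "(\<Prod>s\<in>{1..S} - {s0}. trm (Suc t) s) = (\<Prod>s\<in>{1..S} - {s0}. trm t s)"
      by (rule prod.cong) (auto intro: other)
    have restnn: "(\<Prod>s\<in>{1..S} - {s0}. trm t s) \<ge> 0"
      by (rule prod_nonneg) (use trm_nn[OF tT] in blast)
    have "P (Suc t) = trm (Suc t) s0 * (\<Prod>s\<in>{1..S} - {s0}. trm t s)"
      unfolding P_def prod.remove[OF fin s0] rest ..
    also have "\<dots> \<le> trm t s0 * f * (\<Prod>s\<in>{1..S} - {s0}. trm t s)"
      by (rule mult_right_mono[OF at restnn])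
    also have "\<dots> = P t * f"
      unfolding P_def prod.remove[OF fin s0] by (simp add: ac_simps)
    finally have "P (Suc t) \<le> P t * f" .
    hence "W0 * P (Suc t) \<le> W0 * P t * f"
      using \<open>W0 > 0\<close> by (simp add: mult.assoc)
    also have "\<dots> \<le> W t * f" by (rule mult_right_mono[OF IH f0])
    finally show ?case unfolding WS .
  qed
  have mainT: "W T \<ge> W0 * P T" by (rule main) simp
  have Psi_eq: "kt_Psi (sub_tuple g h T s) = ereal (trm T s)" for s
    unfolding kt_Psi_def trm_def by (rule kt_psi_eq) (use nle[of T s] in simp)
  have part1: "ereal (wealth W0 g w T) \<ge> ereal W0 * (\<Prod>s\<in>{1..S}. kt_Psi (sub_tuple g h T s))"
    using mainT unfolding Psi_eq prod_ereal W_def P_def by simp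
  have part2: "ereal (regret u h g w T)
           \<le> ereal W0 + ereal W0 * kt_phi S (state_count h T) (\<lambda>s. norm (u s) / W0)" for u :: "nat \<Rightarrow> 'v"
  proof -
    define G where "G s = sum_list (sub_tuple g h T s)" for s
    have sum1: "(\<Sum>t=1..T. inner (g t) (u (h t))) = (\<Sum>s\<in>{1..S}. inner (G s) (u s))"
    proof -
      have "(\<Sum>t=1..T. inner (g t) (u (h t))) = (\<Sum>s\<in>{1..S}. \<Sum>t\<in>{t. t \<in> {1..T} \<and> h t = s}. inner (g t) (u (h t)))"
      proof (rule sum.group[symmetric])
        show "h ` {1..T} \<subseteq> {1..S}"
        proof
          fix x assume "x \<in> h ` {1..T}"
          then obtain t where "t \<in> {1..T}" "x = h t" by blast
          then show "x \<in> {1..S}" using h_range[of t] by simp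
        qed
      qed simp_all
      also have "\<dots> = (\<Sum>s\<in>{1..S}. inner (G s) (u s))"
      proof (rule sum.cong[OF refl])
        fix s
        have "(\<Sum>t\<in>{t. t \<in> {1..T} \<and> h t = s}. inner (g t) (u (h t))) = (\<Sum>t\<in>{t \<in> {1..T}. h t = s}. inner (g t) (u s))"
          by (rule sum.cong) auto
        also have "\<dots> = inner (\<Sum>t\<in>{t \<in> {1..T}. h t = s}. g t) (u s)" by (rule inner_sum_left[symmetric])
        also have "\<dots> = inner (G s) (u s)" unfolding G_def sub_tuple_sum ..
        finally show "(\<Sum>t\<in>{t. t \<in> {1..T} \<and> h t = s}. inner (g t) (u (h t))) = inner (G s) (u s)" .
      qed
      finally show ?thesis .
    qed
    have cs: "(\<Sum>s\<in>{1..S}. inner (G s) (u s)) \<le> (\<Sum>s\<in>{1..S}. norm (u s) / W0 * norm (G s)) * W0"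
    proof -
      have "(\<Sum>s\<in>{1..S}. inner (G s) (u s)) \<le> (\<Sum>s\<in>{1..S}. norm (G s) * norm (u s))"
        by (rule sum_mono) (rule Cauchy_Schwarz_ineq2[THEN abs_le_D1])
      also have "\<dots> = (\<Sum>s\<in>{1..S}. norm (u s) / W0 * norm (G s)) * W0"
        unfolding sum_distrib_right using \<open>W0 > 0\<close> by (intro sum.cong) simp_all
      finally show ?thesis .
    qed
    define Q where "Q = (\<Sum>s\<in>{1..S}. norm (u s) / W0 * norm (G s))"
    have reg: "regret u h g w T \<le> W0 + W0 * (Q - P T)"
    proof -
      have "regret u h g w T = (\<Sum>s\<in>{1..S}. inner (G s) (u s)) - (W T - W0)"
        unfolding regret_def sum1 W_def wealth_def by simp
      also have "\<dots> \<le> Q * W0 - (W0 * P T - W0)" using cs mainT unfolding Q_def by linarith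
      finally show ?thesis by (simp add: algebra_simps)
    qed
    define x0 where "x0 = restrict (\<lambda>s. norm (G s)) {1..S}"
    have x0: "x0 \<in> {1..S} \<rightarrow>\<^sub>E (UNIV :: real set)" unfolding x0_def by simp
    have val: "ereal (\<Sum>s=1..S. norm (u s) / W0 * x0 s) - (\<Prod>s\<in>{1..S}. kt_psi (state_count h T s) (x0 s))
         = ereal (Q - P T)"
    proof -
      have "(\<Sum>s=1..S. norm (u s) / W0 * x0 s) = Q" unfolding Q_def x0_def by (rule sum.cong) simp_all
      moreover have "(\<Prod>s\<in>{1..S}. kt_psi (state_count h T s) (x0 s)) = (\<Prod>s\<in>{1..S}. ereal (trm T s))"
      proof (rule prod.cong[OF refl])
        fix s assume "s \<in> {1..S}"
        then have "kt_psi (state_count h T s) (x0 s) = kt_Psi (sub_tuple g h T s)"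
          unfolding x0_def kt_Psi_def G_def sub_tuple_length by simp
        then show "kt_psi (state_count h T s) (x0 s) = ereal (trm T s)" using Psi_eq by simp
      qed
      ultimately show ?thesis unfolding prod_ereal P_def by simp
    qed
    have phi: "ereal (Q - P T) \<le> kt_phi S (state_count h T) (\<lambda>s. norm (u s) / W0)"
      unfolding kt_phi_def fenchel_dual_def val[symmetric]
      by (rule SUP_upper[OF x0])
    have "ereal (regret u h g w T) \<le> ereal W0 + ereal W0 * ereal (Q - P T)"
      using reg by simp
    also have "\<dots> \<le> ereal W0 + ereal W0 * kt_phi S (state_count h T) (\<lambda>s. norm (u s) / W0)"
      using \<open>W0 > 0\<close> by (intro add_left_mono ereal_mult_left_mono phi) simp
    finally show ?thesis .
  qed
  show ?thesis using part1 part2 by blast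
qed

end
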